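(* Let $d\ge 2$. For every unimodular lattice $\mathcal L\subset\mathbb R^d$, every $\vec\alpha\in\mathbb R^d$ and every $N\in\mathbb N$, $$g_N(\vec\alpha,\mathcal L)\le \begin{cases}5 & \text{if } d=2,\\ \sigma_d+1 & \text{if } d\ge 3,\end{cases}$$ where $\sigma_d$ is the kissing number of $\mathbb R^d$.
   Context: A unimodular lattice $\mathcal L\subset\mathbb R^d$ is a lattice of covolume $1$. For $\vec\alpha\in\mathbb R^d$ and $1\le n\le N$, the Kronecker points are $\xi_n=n\vec\alpha+\mathcal L\in\mathbb R^d/\mathcal L$. The nearest neighbour distance of $\xi_n$ is $\delta_{n,N}=\min\{|(m-n)\vec\alpha+\vec\ell|>0 : 1\le m\le N,\ \vec\ell\in\mathcal L\}$, where $|\cdot|$ is the Euclidean norm, and $g_N(\vec\alpha,\mathcal L)=|\{\delta_{n,N}:1\le n\le N\}|$ is the number of distinct nearest neighbour distances. The kissing number $\sigma_d$ is the maximal number of non-overlapping unit balls in $\mathbb R^d$ that can all touch a fixed unit ball. *)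

theory Defs
  imports "HOL-Analysis.Analysis"
begin

definition unimodular_lattice :: "(real ^ 'n) set \<Rightarrow> bool" where
  "unimodular_lattice L \<longleftrightarrow>
     (\<exists>B :: real ^ 'n ^ 'n. invertible B \<and> \<bar>det B\<bar> = 1 \<and>
        L = {B *v v | v :: real ^ 'n. \<forall>i. v $ i \<in> \<int>})"

text \<open>Nearest neighbour distance of the Kronecker point n alpha + L among the first N points.\<close>
definition nn_dist :: "real ^ 'n \<Rightarrow> (real ^ 'n) set \<Rightarrow> nat \<Rightarrow> nat \<Rightarrow> real" where
  "nn_dist \<alpha> L N n =
     Inf {r. \<exists>m l. 1 \<le> m \<and> m \<le> N \<and> l \<in> L \<and>
                r = norm ((real m - real n) *\<^sub>R \<alpha> + l) \<and> r > 0}"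

definition g_N :: "nat \<Rightarrow> real ^ 'n \<Rightarrow> (real ^ 'n) set \<Rightarrow> nat" where
  "g_N N \<alpha> L = card ((\<lambda>n. nn_dist \<alpha> L N n) ` {1..N})"

text \<open>Kissing number: maximal number of non-overlapping unit balls touching a fixed
  unit ball (centred at 0); the centres of the touching balls lie at distance 2 from 0
  and pairwise at distance at least 2 (disjoint interiors).\<close>
definition kissing_number :: "'n::finite itself \<Rightarrow> nat" where
  "kissing_number _ = Max {card S | S :: (real ^ 'n) set. finite S \<and>
       (\<forall>x\<in>S. norm x = 2) \<and> (\<forall>x\<in>S. \<forall>y\<in>S. x \<noteq> y \<longrightarrow> dist x y \<ge> 2)}"

end

theory Submission
  imports Defs
begin

lemma lat_basic:
  fixes L :: "(real ^ 'n) set"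
  assumes "unimodular_lattice L"
  shows "0 \<in> L" "\<And>a b. a \<in> L \<Longrightarrow> b \<in> L \<Longrightarrow> a + b \<in> L"
        "\<And>a. a \<in> L \<Longrightarrow> - a \<in> L" "\<And>a b. a \<in> L \<Longrightarrow> b \<in> L \<Longrightarrow> a - b \<in> L"
        "\<exists>l\<in>L. l \<noteq> 0"
proof -
  obtain B :: "real^'n^'n" where B: "invertible B" "L = {B *v v | v. \<forall>i. v $ i \<in> \<int>}"
    using assms unfolding unimodular_lattice_def by blast
  show "0 \<in> L" unfolding B(2) by (rule CollectI, rule exI[of _ 0]) auto
  show "a + b \<in> L" if ab: "a \<in> L" "b \<in> L" for a b
  proof -
    obtain u w where "a = B *v u" "b = B *v w" "\<forall>i. u $ i \<in> \<int>" "\<forall>i. w $ i \<in> \<int>"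
      using ab unfolding B(2) by blast
    then show ?thesis unfolding B(2)
      by (intro CollectI exI[of _ "u + w"]) (auto simp: matrix_vector_right_distrib)
  qed
  show "- a \<in> L" if a: "a \<in> L" for a
  proof -
    obtain u where "a = B *v u" "\<forall>i. u $ i \<in> \<int>"
      using a unfolding B(2) by blast
    then have "B *v (- u) = - a" by (simp add: matrix_vector_mult_diff_distrib[of B 0 u, simplified])
    then show ?thesis unfolding B(2)
      using \<open>\<forall>i. u $ i \<in> \<int>\<close> by (intro CollectI exI[of _ "- u"]) auto
  qed
  show "a - b \<in> L" if ab: "a \<in> L" "b \<in> L" for a b
  proof -
    obtain u w where "a = B *v u" "b = B *v w" "\<forall>i. u $ i \<in> \<int>" "\<forall>i. w $ i \<in> \<int>"
      using ab unfolding B(2) by blast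
    then show ?thesis unfolding B(2)
      by (intro CollectI exI[of _ "u - w"]) (auto simp: matrix_vector_mult_diff_distrib)
  qed
  obtain i :: 'n where True by auto
  define e :: "real^'n" where "e = axis i 1"
  have "B *v e \<in> L" unfolding B(2) e_def by (auto simp: axis_def)
  moreover have "B *v e \<noteq> 0"
  proof
    assume "B *v e = 0"
    obtain B' where "B' ** B = mat 1" using B(1) unfolding invertible_def by blast
    hence "e = B' *v (B *v e)" by (simp add: matrix_vector_mul_assoc)
    with \<open>B *v e = 0\<close> have "e = 0" by simp
    thus False unfolding e_def by (simp add: axis_eq_0_iff)
  qed
  ultimately show "\<exists>l\<in>L. l \<noteq> 0" by blast
qed

lemma lat_finite:
  fixes L :: "(real ^ 'n) set"
  assumes "unimodular_lattice L"
  shows "finite {l \<in> L. norm (w + l) \<le> c}"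
proof -
  obtain B :: "real^'n^'n" where B: "invertible B" "L = {B *v v | v. \<forall>i. v $ i \<in> \<int>}"
    using assms unfolding unimodular_lattice_def by blast
  obtain B' where B': "B' ** B = mat 1" using B(1) unfolding invertible_def by blast
  obtain K where K: "\<And>x. norm (B' *v x) \<le> norm x * K" and Kpos: "K > 0"
    using bounded_linear.pos_bounded[OF matrix_vector_mul_bounded_linear[of B']] by blast
  define R where "R = (norm w + c) * K"
  define S where "S = {v :: real^'n. \<forall>i. v $ i \<in> \<int> \<and> \<bar>v $ i\<bar> \<le> R}"
  have "finite ((\<lambda>v. vec_nth v) ` S)"
  proof (rule finite_subset)
    show "(\<lambda>v. vec_nth v) ` S \<subseteq> PiE UNIV (\<lambda>_. {k \<in> \<int>. \<bar>k\<bar> \<le> R})"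
      unfolding S_def by auto
    show "finite (PiE (UNIV::'n set) (\<lambda>_. {k \<in> \<int>. \<bar>k\<bar> \<le> R}))"
      by (rule finite_PiE) (auto intro: finite_abs_int_segment)
  qed
  moreover have "inj_on (\<lambda>v. vec_nth v) S" by (auto intro!: inj_onI simp: vec_eq_iff)
  ultimately have fS: "finite S" using finite_imageD by blast
  have "{l \<in> L. norm (w + l) \<le> c} \<subseteq> (\<lambda>v. B *v v) ` S"
  proof
    fix l assume "l \<in> {l \<in> L. norm (w + l) \<le> c}"
    then obtain v where v: "l = B *v v" "\<forall>i. v $ i \<in> \<int>" and nl: "norm (w + l) \<le> c"
      unfolding B(2) by blast
    have "norm l \<le> norm w + c" using norm_triangle_ineq4[of "w + l" w] nl
      by (simp add: norm_minus_commute)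
    have "v = B' *v l" using B' v(1) by (simp add: matrix_vector_mul_assoc)
    hence "norm v \<le> norm l * K" using K by simp
    moreover have "K \<ge> 0" using Kpos by simp
    ultimately have "norm v \<le> R" unfolding R_def
      using \<open>norm l \<le> norm w + c\<close> mult_right_mono by fastforce
    hence "v \<in> S" unfolding S_def using v(2) component_le_norm_cart order_trans by blast
    thus "l \<in> (\<lambda>v. B *v v) ` S" using v(1) by blast
  qed
  thus ?thesis using fS finite_subset by blast
qed

definition rho :: "real^'n \<Rightarrow> (real^'n) set \<Rightarrow> int \<Rightarrow> real" where
  "rho \<alpha> L k = Inf {r. \<exists>l\<in>L. r = norm (of_int k *\<^sub>R \<alpha> + l) \<and> r > 0}"

lemma rho_props:
  fixes L :: "(real ^ 'n) set"
  assumes "unimodular_lattice L"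
  shows "\<exists>l\<in>L. norm (of_int k *\<^sub>R \<alpha> + l) = rho \<alpha> L k \<and> rho \<alpha> L k > 0"
    and "\<And>l. l \<in> L \<Longrightarrow> of_int k *\<^sub>R \<alpha> + l \<noteq> 0 \<Longrightarrow> rho \<alpha> L k \<le> norm (of_int k *\<^sub>R \<alpha> + l)"
proof -
  define w where "w = of_int k *\<^sub>R \<alpha>"
  define D where "D = {r. \<exists>l\<in>L. r = norm (w + l) \<and> r > 0}"
  have rD: "rho \<alpha> L k = Inf D" unfolding rho_def D_def w_def by simp
  obtain l0 where l0: "l0 \<in> L" "l0 \<noteq> 0" using lat_basic(5)[OF assms] by blast
  obtain l1 where l1: "l1 \<in> L" "w + l1 \<noteq> 0"
  proof (cases "w = 0")
    case True thus ?thesis using that l0 by auto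
  next
    case False thus ?thesis using that lat_basic(1)[OF assms] by auto
  qed
  define d0 where "d0 = norm (w + l1)"
  define E where "E = {l \<in> L. norm (w + l) \<le> d0 \<and> w + l \<noteq> 0}"
  have fE: "finite E" unfolding E_def
    by (rule finite_subset[OF _ lat_finite[OF assms, of w d0]]) auto
  have l1E: "l1 \<in> E" unfolding E_def d0_def using l1 by auto
  define m where "m = Min ((\<lambda>l. norm (w + l)) ` E)"
  have mE: "m \<in> (\<lambda>l. norm (w + l)) ` E" unfolding m_def using fE l1E by (intro Min_in) auto
  then obtain lm where lm: "lm \<in> E" "m = norm (w + lm)" by blast
  have mD: "m \<in> D" using lm unfolding D_def E_def by auto
  have mle: "m \<le> r" if rin: "r \<in> D" for r
  proof -
    obtain l where l: "l \<in> L" "r = norm (w + l)" "r > 0" using rin unfolding D_def by blast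
    show ?thesis
    proof (cases "r \<le> d0")
      case True
      hence "l \<in> E" unfolding E_def using l by auto
      thus ?thesis unfolding m_def l(2) using fE by (intro Min_le) auto
    next
      case False
      have "m \<le> d0" unfolding m_def d0_def using fE l1E by (intro Min_le) auto
      thus ?thesis using False by simp
    qed
  qed
  have Dm: "Inf D = m" using mD mle by (intro cInf_eq_minimum)
  have rm: "rho \<alpha> L k = m" using rD Dm by simp
  have "lm \<in> L" "m > 0" using lm mD unfolding E_def D_def by auto
  thus "\<exists>l\<in>L. norm (of_int k *\<^sub>R \<alpha> + l) = rho \<alpha> L k \<and> rho \<alpha> L k > 0"
    using lm(2) unfolding rm w_def by auto
  show "rho \<alpha> L k \<le> norm (of_int k *\<^sub>R \<alpha> + l)" if ll: "l \<in> L" "of_int k *\<^sub>R \<alpha> + l \<noteq> 0" for l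
  proof -
    have "norm (w + l) \<in> D" unfolding D_def using ll unfolding w_def by auto
    thus ?thesis using mle rm unfolding w_def by auto
  qed
qed

lemma rho_neg:
  fixes L :: "(real ^ 'n) set"
  assumes "unimodular_lattice L"
  shows "rho \<alpha> L (- k) = rho \<alpha> L k"
proof -
  have e: "norm (of_int (- j) *\<^sub>R \<alpha> + l) = norm (of_int j *\<^sub>R \<alpha> + (- l))" for j l
  proof -
    have "of_int (- j) *\<^sub>R \<alpha> + l = - (of_int j *\<^sub>R \<alpha> + (- l))" by (simp add: algebra_simps)
    thus ?thesis by (simp only: norm_minus_cancel)
  qed
  have neg: "- l \<in> L" if "l \<in> L" for l using lat_basic(3)[OF assms that] .
  have "{r. \<exists>l\<in>L. r = norm (of_int (- k) *\<^sub>R \<alpha> + l) \<and> r > 0} \<subseteq>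
        {r. \<exists>l\<in>L. r = norm (of_int k *\<^sub>R \<alpha> + l) \<and> r > 0}"
  proof
    fix r assume "r \<in> {r. \<exists>l\<in>L. r = norm (of_int (- k) *\<^sub>R \<alpha> + l) \<and> r > 0}"
    then obtain l where l: "l \<in> L" "r = norm (of_int (- k) *\<^sub>R \<alpha> + l)" "r > 0" by blast
    have "r = norm (of_int k *\<^sub>R \<alpha> + (- l))" using l(2) e by simp
    thus "r \<in> {r. \<exists>l\<in>L. r = norm (of_int k *\<^sub>R \<alpha> + l) \<and> r > 0}" using neg[OF l(1)] l(3) by blast
  qed
  moreover have "{r. \<exists>l\<in>L. r = norm (of_int k *\<^sub>R \<alpha> + l) \<and> r > 0} \<subseteq>
        {r. \<exists>l\<in>L. r = norm (of_int (- k) *\<^sub>R \<alpha> + l) \<and> r > 0}"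
  proof
    fix r assume "r \<in> {r. \<exists>l\<in>L. r = norm (of_int k *\<^sub>R \<alpha> + l) \<and> r > 0}"
    then obtain l where l: "l \<in> L" "r = norm (of_int k *\<^sub>R \<alpha> + l)" "r > 0" by blast
    have "r = norm (of_int (- k) *\<^sub>R \<alpha> + (- l))" using l(2) e[of "- k" l] by simp
    thus "r \<in> {r. \<exists>l\<in>L. r = norm (of_int (- k) *\<^sub>R \<alpha> + l) \<and> r > 0}" using neg[OF l(1)] l(3) by blast
  qed
  ultimately have "{r. \<exists>l\<in>L. r = norm (of_int (- k) *\<^sub>R \<alpha> + l) \<and> r > 0} =
        {r. \<exists>l\<in>L. r = norm (of_int k *\<^sub>R \<alpha> + l) \<and> r > 0}" by (rule subset_antisym)
  thus ?thesis unfolding rho_def by (rule arg_cong)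
qed

definition Gm :: "real^'n \<Rightarrow> (real^'n) set \<Rightarrow> int \<Rightarrow> real" where
  "Gm \<alpha> L t = Min (rho \<alpha> L ` {-t..t})"

lemma Gm_le: "\<bar>k\<bar> \<le> t \<Longrightarrow> Gm \<alpha> L t \<le> rho \<alpha> L k"
  unfolding Gm_def by (rule Min_le) (auto simp: abs_le_iff)

lemma Gm_in: "0 \<le> t \<Longrightarrow> \<exists>k. \<bar>k\<bar> \<le> t \<and> Gm \<alpha> L t = rho \<alpha> L k"
proof -
  assume "0 \<le> t"
  hence "Gm \<alpha> L t \<in> rho \<alpha> L ` {-t..t}" unfolding Gm_def by (intro Min_in) auto
  then obtain x where "x \<in> {-t..t}" "Gm \<alpha> L t = rho \<alpha> L x" by blast
  thus ?thesis by (intro exI[of _ x]) (auto simp: abs_le_iff)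
qed

lemma Gm_mono: "0 \<le> s \<Longrightarrow> s \<le> t \<Longrightarrow> Gm \<alpha> L t \<le> Gm \<alpha> L s"
proof -
  assume "0 \<le> s" "s \<le> t"
  then obtain k where "\<bar>k\<bar> \<le> s" "Gm \<alpha> L s = rho \<alpha> L k" using Gm_in by blast
  thus ?thesis using Gm_le[of k t \<alpha> L] \<open>s \<le> t\<close> by auto
qed

lemma Gm_step:
  fixes L :: "(real ^ 'n) set"
  assumes "unimodular_lattice L" "1 \<le> t"
  shows "Gm \<alpha> L t = min (Gm \<alpha> L (t - 1)) (rho \<alpha> L t)"
proof -
  obtain k where k: "\<bar>k\<bar> \<le> t" "Gm \<alpha> L t = rho \<alpha> L k" using Gm_in[of t] assms by auto
  have mono: "Gm \<alpha> L t \<le> Gm \<alpha> L (t - 1)" using assms(2) by (intro Gm_mono) auto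
  have le: "Gm \<alpha> L t \<le> rho \<alpha> L t" using Gm_le[of t t \<alpha> L] assms(2) by simp
  show ?thesis
  proof (cases "\<bar>k\<bar> = t")
    case True
    hence "rho \<alpha> L k = rho \<alpha> L t" using rho_neg[OF assms(1)] by (cases "k \<ge> 0") (auto simp: abs_if)
    hence "Gm \<alpha> L t = rho \<alpha> L t" using k by simp
    thus ?thesis using mono by (auto simp: min_def)
  next
    case False
    hence "Gm \<alpha> L (t-1) \<le> rho \<alpha> L k" using k(1) by (intro Gm_le) auto
    hence "Gm \<alpha> L t = Gm \<alpha> L (t - 1)" using k(2) mono by simp
    thus ?thesis using le by (auto simp: min_def)
  qed
qed

lemma lowbd:
  fixes L :: "(real ^ 'n) set"
  assumes "unimodular_lattice L" "l \<in> L" "\<bar>k\<bar> \<le> s" "of_int k *\<^sub>R \<alpha> + l \<noteq> 0"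
  shows "Gm \<alpha> L s \<le> norm (of_int k *\<^sub>R \<alpha> + l)"
  using Gm_le[OF assms(3), of \<alpha> L] rho_props(2)[OF assms(1,2,4)] by linarith

lemma nn_dist_eq:
  fixes L :: "(real ^ 'n) set"
  assumes "unimodular_lattice L" "1 \<le> n" "n \<le> N"
  shows "nn_dist \<alpha> L N n = Gm \<alpha> L (max (int n - 1) (int N - int n))"
proof -
  define T where "T = max (int n - 1) (int N - int n)"
  define S where "S = {r. \<exists>m l. 1 \<le> m \<and> m \<le> N \<and> l \<in> L \<and>
                r = norm ((real m - real n) *\<^sub>R \<alpha> + l) \<and> r > 0}"
  have T0: "0 \<le> T" unfolding T_def using assms by auto
  obtain k where k: "\<bar>k\<bar> \<le> T" "Gm \<alpha> L T = rho \<alpha> L k" using Gm_in[OF T0] by blast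
  obtain k' where k': "1 - int n \<le> k'" "k' \<le> int N - int n" "rho \<alpha> L k' = rho \<alpha> L k"
  proof (cases "1 - int n \<le> k \<and> k \<le> int N - int n")
    case True thus ?thesis using that by auto
  next
    case False
    hence "1 - int n \<le> - k \<and> - k \<le> int N - int n" using k(1) assms(2,3) unfolding T_def by (auto simp: abs_le_iff)
    thus ?thesis using that rho_neg[OF assms(1), of \<alpha> k] by auto
  qed
  obtain l where l: "l \<in> L" "norm (of_int k' *\<^sub>R \<alpha> + l) = rho \<alpha> L k'" "rho \<alpha> L k' > 0"
    using rho_props(1)[OF assms(1)] by blast
  define m where "m = nat (int n + k')"
  have m: "1 \<le> m" "m \<le> N" "real m - real n = of_int k'" unfolding m_def using k' assms by auto
  have inS: "Gm \<alpha> L T \<in> S" unfolding S_def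
    using m l k k' by (intro CollectI exI[of _ m] exI[of _ l]) auto
  have lb: "Gm \<alpha> L T \<le> r" if rS: "r \<in> S" for r
  proof -
    obtain m l where ml: "1 \<le> m" "m \<le> N" "l \<in> L" "r = norm ((real m - real n) *\<^sub>R \<alpha> + l)" "r > 0"
      using rS unfolding S_def by blast
    have e: "real m - real n = of_int (int m - int n)" by simp
    show ?thesis unfolding ml(4) e
      using ml by (intro lowbd[OF assms(1)]) (auto simp: T_def)
  qed
  have "nn_dist \<alpha> L N n = Inf S" unfolding nn_dist_def S_def by simp
  also have "\<dots> = Gm \<alpha> L T" using inS lb by (intro cInf_eq_minimum)
  finally show ?thesis unfolding T_def .
qed

lemma G_real:
  fixes p q a b :: real
  assumes qp: "q \<le> p" and q1: "1 < q" and a3: "pi/3 < a" and b3: "pi/3 < b" and ab: "a + b < pi"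
  shows "(p * cos a + q * cos b - 1)\<^sup>2 + (p * sin a - q * sin b)\<^sup>2 < p\<^sup>2"
proof -
  define th where "th = a + b"
  have th1: "2*pi/3 < th" "th < pi" using a3 b3 ab unfolding th_def by auto
  have cth: "cos th < -1/2"
    using cos_monotone_0_pi[of "2*pi/3" th] th1 cos_120 by auto
  have sth: "sin th > 0" using th1 by (intro sin_gt_zero) auto
  have sb: "sin b > 0" using b3 ab a3 by (intro sin_gt_zero) auto
  have cb1: "cos b \<le> 1" by simp
  have ca: "cos a = cos th * cos b + sin th * sin b"
    using cos_diff[of th b] unfolding th_def by simp
  have cab: "cos a * cos b - sin a * sin b = cos th" using cos_add[of a b] unfolding th_def by simp
  have expand: "(p * cos a + q * cos b - 1)\<^sup>2 + (p * sin a - q * sin b)\<^sup>2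
      = p\<^sup>2 * ((sin a)\<^sup>2 + (cos a)\<^sup>2) + q\<^sup>2 * ((sin b)\<^sup>2 + (cos b)\<^sup>2) + 1
        + 2*p*q*(cos a * cos b - sin a * sin b) - 2*p*cos a - 2*q*cos b"
    by algebra
  hence "(p * cos a + q * cos b - 1)\<^sup>2 + (p * sin a - q * sin b)\<^sup>2
      = p\<^sup>2 * 1 + q\<^sup>2 * 1 + 1 + 2*p*q*cos th - 2*p*cos a - 2*q*cos b"
    by (simp only: sin_cos_squared_add cab)
  hence E: "(p * cos a + q * cos b - 1)\<^sup>2 + (p * sin a - q * sin b)\<^sup>2 - p\<^sup>2
      = q\<^sup>2 + 1 + 2*p*q*cos th - 2*p*cos a - 2*q*cos b"
    by simp
  have step1: "q * cos th - cos a < 0"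
  proof -
    have "q * cos th - cos a = cos th * (q - cos b) - sin th * sin b" using ca by (simp add: algebra_simps)
    moreover have "cos th * (q - cos b) < 0"
    proof (rule mult_neg_pos)
      show "cos th < 0" using cth by linarith
      show "0 < q - cos b" using q1 cos_le_one[of b] by linarith
    qed
    moreover have "sin th * sin b > 0" using sth sb by simp
    ultimately show ?thesis by linarith
  qed
  have E1: "q\<^sup>2 + 1 + 2*p*q*cos th - 2*p*cos a - 2*q*cos b \<le> q\<^sup>2 + 1 + 2*q*q*cos th - 2*q*cos a - 2*q*cos b"
  proof -
    have "(p - q) * (q * cos th - cos a) \<le> 0" using qp step1 by (intro mult_nonneg_nonpos) auto
    thus ?thesis by (simp add: algebra_simps)
  qed
  have step2: "cos a + cos b \<ge> cos (th - pi/3) + 1/2"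
  proof -
    have s: "cos a + cos b = 2 * cos (th/2) * cos ((a - b)/2)" using cos_plus_cos[of a b] unfolding th_def by simp
    have c2: "cos (th/2) > 0" using th1 by (intro cos_gt_zero_pi) auto
    have "cos ((a - b)/2) = cos \<bar>(a - b)/2\<bar>" by (rule cos_abs_real[symmetric])
    also have "\<dots> \<ge> cos ((th - 2*pi/3)/2)"
      using a3 b3 th1 unfolding th_def by (intro cos_monotone_0_pi_le) auto
    finally have "cos ((a - b)/2) \<ge> cos (th/2 - pi/3)" by (simp add: field_simps)
    hence "cos a + cos b \<ge> 2 * cos (th/2) * cos (th/2 - pi/3)" using s c2 by simp
    moreover have "2 * cos (th/2) * cos (th/2 - pi/3) = cos (pi/3) + cos (th - pi/3)"
    proof -
      have e1: "th/2 - (th/2 - pi/3) = pi/3" by simp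
      have e2: "th/2 + (th/2 - pi/3) = th - pi/3" by simp
      show ?thesis using cos_times_cos[of "th/2" "th/2 - pi/3"] unfolding e1 e2 by simp
    qed
    ultimately show ?thesis using cos_60 by simp
  qed
  have step3: "cos (th - pi/3) > -1/2"
    using cos_monotone_0_pi[of "th - pi/3" "2*pi/3"] th1 cos_120 by auto
  have step4: "2 * cos th - 2 * cos (th - pi/3) + 1 < 0"
  proof -
    have "cos th - cos (th - pi/3) = 2 * sin ((2*th - pi/3)/2) * sin ((- pi/3)/2)"
      using cos_diff_cos[of th "th - pi/3"] by (simp add: field_simps)
    also have "sin ((- pi/3)/2) = - 1/2" using sin_30 by (simp add: field_simps)
    also have "sin ((2*th - pi/3)/2) = sin (7*pi/6 - th)"
    proof -
      have eq: "(2*th - pi/3)/2 = pi - (7*pi/6 - th)" by (simp add: field_simps)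
      show ?thesis unfolding eq by (rule sin_pi_minus)
    qed
    finally have e: "cos th - cos (th - pi/3) = - sin (7*pi/6 - th)" by simp
    have "sin (pi/6) < sin (7*pi/6 - th)" using th1 by (intro sin_monotone_2pi) auto
    thus ?thesis using e sin_30 by simp
  qed
  have final: "q\<^sup>2 + 1 + 2*q*q*cos th - 2*q*cos a - 2*q*cos b < 0"
  proof -
    define c1 where "c1 = 1 + 2 * cos th"
    define c2 where "c2 = 2 * cos (th - pi/3) + 1"
    have c1n: "c1 < 0" unfolding c1_def using cth by simp
    have c12: "c1 - c2 < -1" unfolding c1_def c2_def using step4 by simp
    have "c2 * q \<le> (cos a + cos b) * 2 * q" unfolding c2_def using step2 q1
      by (intro mult_right_mono) auto
    hence f1: "c2 * q \<le> 2*q*cos a + 2*q*cos b" by (simp add: algebra_simps)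
    have f2: "c1 * (q * q) \<le> c1 * q"
      using c1n q1 by (intro mult_left_mono_neg) auto
    have "(c1 - c2) * q < -1 * q" using c12 q1 by (intro mult_strict_right_mono) auto
    hence f3: "c1 * q - c2 * q < - q" by (simp add: algebra_simps)
    have "c1 * (q*q) - 2*q*cos a - 2*q*cos b + 1 < 0" using f1 f2 f3 q1 by linarith
    moreover have "q\<^sup>2 + 1 + 2*q*q*cos th - 2*q*cos a - 2*q*cos b = c1 * (q*q) - 2*q*cos a - 2*q*cos b + 1"
      unfolding c1_def by (simp add: algebra_simps power2_eq_square)
    ultimately show ?thesis by linarith
  qed
  show ?thesis using E E1 final by linarith
qed

lemma re_im_arg: "Re z = cmod z * cos (Arg z)" "Im z = cmod z * sin (Arg z)"
  by (metis Re_rcis rcis_cmod_Arg, metis Im_rcis rcis_cmod_Arg)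

lemma pair_contra:
  fixes x y :: complex
  assumes "1 < cmod x" "1 < cmod y" "pi/3 < Arg x" "Arg y < - (pi/3)" "Arg x - Arg y < pi"
  shows "cmod (x + y - 1) < max (cmod x) (cmod y)"
proof -
  define p q a b where "p = cmod x" "q = cmod y" "a = Arg x" "b = - Arg y"
  have rx: "Re x = p * cos a" "Im x = p * sin a" unfolding p_q_a_b_def by (rule re_im_arg)+
  have ry: "Re y = q * cos b" "Im y = - (q * sin b)" unfolding p_q_a_b_def using re_im_arg[of y] by auto
  have sq: "(cmod (x + y - 1))\<^sup>2 = (p * cos a + q * cos b - 1)\<^sup>2 + (p * sin a - q * sin b)\<^sup>2"
    unfolding cmod_power2 using rx ry by simp
  have ab: "pi/3 < a" "pi/3 < b" "a + b < pi" using assms unfolding p_q_a_b_def by auto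
  have "(cmod (x + y - 1))\<^sup>2 < (max p q)\<^sup>2"
  proof (cases "q \<le> p")
    case True
    thus ?thesis using G_real[OF True _ ab] assms(2) sq unfolding p_q_a_b_def by (simp add: max_def)
  next
    case False
    have "(q * cos b + p * cos a - 1)\<^sup>2 + (q * sin b - p * sin a)\<^sup>2 < q\<^sup>2"
      using False assms(1) ab unfolding p_q_a_b_def by (intro G_real) auto
    moreover have "(q * sin b - p * sin a)\<^sup>2 = (p * sin a - q * sin b)\<^sup>2" by (simp add: power2_commute)
    ultimately show ?thesis using False sq by (simp add: max_def add.commute)
  qed
  thus ?thesis unfolding p_q_a_b_def
    by (rule power_less_imp_less_base) (simp add: le_max_iff_disj)
qed

lemma arg_sep1:
  fixes z :: complex
  assumes "1 < cmod z" "cmod z < cmod (z - 1)"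
  shows "pi/3 < \<bar>Arg z\<bar>"
proof (rule ccontr)
  assume "\<not> pi/3 < \<bar>Arg z\<bar>"
  hence "cos (pi/3) \<le> cos \<bar>Arg z\<bar>" by (intro cos_monotone_0_pi_le) auto
  hence c: "cos (Arg z) \<ge> 1/2" using cos_60 by simp
  have "(cmod z)\<^sup>2 < (cmod (z - 1))\<^sup>2" using assms by (intro power_strict_mono) auto
  hence "Re z < 1/2" unfolding cmod_power2 by (simp add: power2_eq_square algebra_simps)
  moreover have "cmod z * (1/2) \<le> cmod z * cos (Arg z)" by (rule mult_left_mono) (use c in auto)
  hence "Re z \<ge> cmod z * (1/2)" using re_im_arg(1)[of z] by simp
  ultimately show False using assms(1) by simp
qed

lemma arg_sep2:
  fixes z w :: complex
  assumes "z \<noteq> 0" "w \<noteq> 0" "max (cmod z) (cmod w) < cmod (z - w)"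
  shows "pi/3 < \<bar>Arg z - Arg w\<bar> \<and> \<bar>Arg z - Arg w\<bar> < 5*pi/3"
proof (rule ccontr)
  define p q d where "p = cmod z" "q = cmod w" "d = Arg z - Arg w"
  assume "\<not> (pi/3 < \<bar>Arg z - Arg w\<bar> \<and> \<bar>Arg z - Arg w\<bar> < 5*pi/3)"
  hence dd: "\<bar>d\<bar> \<le> pi/3 \<or> 5*pi/3 \<le> \<bar>d\<bar>" unfolding p_q_d_def by auto
  have d2: "\<bar>d\<bar> < 2*pi" unfolding p_q_d_def using Arg_bounded[of z] Arg_bounded[of w] by auto
  have c: "cos d \<ge> 1/2"
  proof (cases "\<bar>d\<bar> \<le> pi/3")
    case True
    hence "cos (pi/3) \<le> cos \<bar>d\<bar>" by (intro cos_monotone_0_pi_le) auto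
    thus ?thesis using cos_60 by simp
  next
    case False
    hence "5*pi/3 \<le> \<bar>d\<bar>" using dd by auto
    hence "cos (pi/3) \<le> cos (2*pi - \<bar>d\<bar>)" using d2 by (intro cos_monotone_0_pi_le) auto
    thus ?thesis using cos_60 by simp
  qed
  have "(cmod (z - w))\<^sup>2 = (p * cos (Arg z) - q * cos (Arg w))\<^sup>2 + (p * sin (Arg z) - q * sin (Arg w))\<^sup>2"
    unfolding cmod_power2 p_q_d_def using re_im_arg[of z] re_im_arg[of w] by simp
  also have "\<dots> = p\<^sup>2 * ((sin (Arg z))\<^sup>2 + (cos (Arg z))\<^sup>2) + q\<^sup>2 * ((sin (Arg w))\<^sup>2 + (cos (Arg w))\<^sup>2)
      - 2*p*q*(cos (Arg z) * cos (Arg w) + sin (Arg z) * sin (Arg w))"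
    by algebra
  also have "\<dots> = p\<^sup>2 + q\<^sup>2 - 2*p*q*cos d" unfolding p_q_d_def by (simp add: cos_diff)
  finally have e: "(cmod (z - w))\<^sup>2 = p\<^sup>2 + q\<^sup>2 - 2*p*q*cos d" .
  have pq: "p > 0" "q > 0" using assms unfolding p_q_d_def by auto
  have "2*p*q*cos d \<ge> 2*p*q*(1/2)" using c pq by (intro mult_left_mono) auto
  hence "(cmod (z - w))\<^sup>2 \<le> p\<^sup>2 + q\<^sup>2 - p*q" using e by simp
  also have "\<dots> \<le> (max p q)\<^sup>2"
  proof (cases "p \<le> q")
    case True
    have "p * p \<le> p * q" using True pq by (intro mult_left_mono) auto
    thus ?thesis using True by (simp add: max_def power2_eq_square)
  next
    case False
    have "q * q \<le> p * q" using False pq by (intro mult_right_mono) auto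
    thus ?thesis using False by (simp add: max_def power2_eq_square)
  qed
  finally have "cmod (z - w) \<le> max p q"
    by (rule power2_le_imp_le) (use pq in auto)
  thus False using assms(3) unfolding p_q_d_def by simp
qed

lemma comb4q:
  fixes Q a b c d :: real
  assumes "Q > 0"
   "- 3*Q < a" "a \<le> 3*Q" "Q < \<bar>a\<bar>" "- 3*Q < b" "b \<le> 3*Q" "Q < \<bar>b\<bar>"
   "- 3*Q < c" "c \<le> 3*Q" "Q < \<bar>c\<bar>" "- 3*Q < d" "d \<le> 3*Q" "Q < \<bar>d\<bar>"
   "Q < \<bar>a - b\<bar>" "\<bar>a - b\<bar> < 5*Q" "Q < \<bar>a - c\<bar>" "\<bar>a - c\<bar> < 5*Q"
   "Q < \<bar>a - d\<bar>" "\<bar>a - d\<bar> < 5*Q" "Q < \<bar>b - c\<bar>" "\<bar>b - c\<bar> < 5*Q"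
   "Q < \<bar>b - d\<bar>" "\<bar>b - d\<bar> < 5*Q" "Q < \<bar>c - d\<bar>" "\<bar>c - d\<bar> < 5*Q"
  shows "(Q < a \<and> b < -Q \<and> a - b < 3*Q) \<or> (Q < a \<and> c < -Q \<and> a - c < 3*Q) \<or> (Q < a \<and> d < -Q \<and> a - d < 3*Q)
    \<or> (Q < b \<and> a < -Q \<and> b - a < 3*Q) \<or> (Q < b \<and> c < -Q \<and> b - c < 3*Q) \<or> (Q < b \<and> d < -Q \<and> b - d < 3*Q)
    \<or> (Q < c \<and> a < -Q \<and> c - a < 3*Q) \<or> (Q < c \<and> b < -Q \<and> c - b < 3*Q) \<or> (Q < c \<and> d < -Q \<and> c - d < 3*Q)
    \<or> (Q < d \<and> a < -Q \<and> d - a < 3*Q) \<or> (Q < d \<and> b < -Q \<and> d - b < 3*Q) \<or> (Q < d \<and> c < -Q \<and> d - c < 3*Q)"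
  using assms by (smt (z3))

lemma planar4:
  fixes a b c d :: complex
  assumes dist: "distinct [a,b,c,d]"
    and one: "\<forall>z\<in>{a,b,c,d}. 1 < cmod z \<and> cmod z < cmod (z - 1)"
    and two: "\<forall>z\<in>{a,b,c,d}. \<forall>w\<in>{a,b,c,d}. z \<noteq> w \<longrightarrow>
        max (cmod z) (cmod w) < cmod (z - w) \<and> max (cmod z) (cmod w) < cmod (z + w - 1)"
  shows False
proof -
  define Q where "Q = pi/3"
  have Q0: "Q > 0" unfolding Q_def by simp
  have h1: "- 3*Q < Arg z \<and> Arg z \<le> 3*Q \<and> Q < \<bar>Arg z\<bar>" if zin: "z \<in> {a,b,c,d}" for z
  proof -
    have "1 < cmod z \<and> cmod z < cmod (z - 1)" using one zin by blast
    hence "pi/3 < \<bar>Arg z\<bar>" using arg_sep1[of z] by blast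
    thus ?thesis using Arg_bounded[of z] unfolding Q_def by linarith
  qed
  have h2: "Q < \<bar>Arg z - Arg w\<bar> \<and> \<bar>Arg z - Arg w\<bar> < 5*Q"
    if "z \<in> {a,b,c,d}" "w \<in> {a,b,c,d}" "z \<noteq> w" for z w
  proof -
    have "z \<noteq> 0" "w \<noteq> 0" using one that by auto
    moreover have "max (cmod z) (cmod w) < cmod (z - w)" using two that by blast
    ultimately have "pi/3 < \<bar>Arg z - Arg w\<bar> \<and> \<bar>Arg z - Arg w\<bar> < 5*pi/3" by (rule arg_sep2)
    thus ?thesis unfolding Q_def by simp
  qed
  have np: "\<not> (Q < Arg z \<and> Arg w < - Q \<and> Arg z - Arg w < 3*Q)"
    if "z \<in> {a,b,c,d}" "w \<in> {a,b,c,d}" for z w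
  proof
    assume A: "Q < Arg z \<and> Arg w < - Q \<and> Arg z - Arg w < 3*Q"
    hence "z \<noteq> w" using Q0 by auto
    hence "max (cmod z) (cmod w) < cmod (z + w - 1)" using two that by blast
    moreover have "cmod (z + w - 1) < max (cmod z) (cmod w)"
    proof (rule pair_contra)
      show "1 < cmod z" "1 < cmod w" using one that by auto
      show "pi / 3 < Arg z" "Arg w < - (pi / 3)" "Arg z - Arg w < pi" using A unfolding Q_def by auto
    qed
    ultimately show False by (auto simp: less_max_iff_disj)
  qed
  have ne: "a \<noteq> b" "a \<noteq> c" "a \<noteq> d" "b \<noteq> c" "b \<noteq> d" "c \<noteq> d" using dist by auto
  have ha: "- 3*Q < Arg a" "Arg a \<le> 3*Q" "Q < \<bar>Arg a\<bar>" using h1[of a] by auto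
  have hb: "- 3*Q < Arg b" "Arg b \<le> 3*Q" "Q < \<bar>Arg b\<bar>" using h1[of b] by auto
  have hc: "- 3*Q < Arg c" "Arg c \<le> 3*Q" "Q < \<bar>Arg c\<bar>" using h1[of c] by auto
  have hd: "- 3*Q < Arg d" "Arg d \<le> 3*Q" "Q < \<bar>Arg d\<bar>" using h1[of d] by auto
  have pab: "Q < \<bar>Arg a - Arg b\<bar>" "\<bar>Arg a - Arg b\<bar> < 5*Q" using h2[of a b] ne by auto
  have pac: "Q < \<bar>Arg a - Arg c\<bar>" "\<bar>Arg a - Arg c\<bar> < 5*Q" using h2[of a c] ne by auto
  have pad: "Q < \<bar>Arg a - Arg d\<bar>" "\<bar>Arg a - Arg d\<bar> < 5*Q" using h2[of a d] ne by auto
  have pbc: "Q < \<bar>Arg b - Arg c\<bar>" "\<bar>Arg b - Arg c\<bar> < 5*Q" using h2[of b c] ne by auto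
  have pbd: "Q < \<bar>Arg b - Arg d\<bar>" "\<bar>Arg b - Arg d\<bar> < 5*Q" using h2[of b d] ne by auto
  have pcd: "Q < \<bar>Arg c - Arg d\<bar>" "\<bar>Arg c - Arg d\<bar> < 5*Q" using h2[of c d] ne by auto
  have npr: "\<forall>z\<in>{a,b,c,d}. \<forall>w\<in>{a,b,c,d}. \<not> (Q < Arg z \<and> Arg w < - Q \<and> Arg z - Arg w < 3*Q)"
    using np by blast
  have disj: "(Q < Arg a \<and> Arg b < -Q \<and> Arg a - Arg b < 3*Q) \<or> (Q < Arg a \<and> Arg c < -Q \<and> Arg a - Arg c < 3*Q) \<or> (Q < Arg a \<and> Arg d < -Q \<and> Arg a - Arg d < 3*Q)
    \<or> (Q < Arg b \<and> Arg a < -Q \<and> Arg b - Arg a < 3*Q) \<or> (Q < Arg b \<and> Arg c < -Q \<and> Arg b - Arg c < 3*Q) \<or> (Q < Arg b \<and> Arg d < -Q \<and> Arg b - Arg d < 3*Q)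
    \<or> (Q < Arg c \<and> Arg a < -Q \<and> Arg c - Arg a < 3*Q) \<or> (Q < Arg c \<and> Arg b < -Q \<and> Arg c - Arg b < 3*Q) \<or> (Q < Arg c \<and> Arg d < -Q \<and> Arg c - Arg d < 3*Q)
    \<or> (Q < Arg d \<and> Arg a < -Q \<and> Arg d - Arg a < 3*Q) \<or> (Q < Arg d \<and> Arg b < -Q \<and> Arg d - Arg b < 3*Q) \<or> (Q < Arg d \<and> Arg c < -Q \<and> Arg d - Arg c < 3*Q)"
    by (rule comb4q[OF Q0 ha hb hc hd pab pac pad pbc pbd pcd])
  show False using disj np[of a b] np[of a c] np[of a d] np[of b a] np[of b c] np[of b d]
    np[of c a] np[of c b] np[of c d] np[of d a] np[of d b] np[of d c] by auto
qed

lemma kissing_sets_bounded: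
  "\<exists>K. \<forall>S :: (real^'n) set. (\<forall>x\<in>S. norm x = 2) \<and> (\<forall>x\<in>S. \<forall>y\<in>S. x \<noteq> y \<longrightarrow> dist x y \<ge> 2)
        \<longrightarrow> finite S \<longrightarrow> card S \<le> K"
proof -
  have cpt: "compact (sphere (0::real^'n) 2)" by simp
  have cover: "sphere (0::real^'n) 2 \<subseteq> (\<Union>c\<in>sphere 0 2. ball c 1)" by force
  obtain C where C: "C \<subseteq> sphere 0 2" "finite C" "sphere (0::real^'n) 2 \<subseteq> (\<Union>c\<in>C. ball c 1)"
    using compactE_image[OF cpt _ cover] by blast
  show ?thesis
  proof (intro exI[of _ "card C"] allI impI)
    fix S :: "(real^'n) set"
    assume S: "(\<forall>x\<in>S. norm x = 2) \<and> (\<forall>x\<in>S. \<forall>y\<in>S. x \<noteq> y \<longrightarrow> dist x y \<ge> 2)" and fS: "finite S"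
    define f where "f s = (SOME c. c \<in> C \<and> s \<in> ball c 1)" for s
    have f: "f s \<in> C \<and> s \<in> ball (f s) 1" if "s \<in> S" for s
    proof -
      have "s \<in> sphere 0 2" using S that by auto
      hence "s \<in> (\<Union>c\<in>C. ball c 1)" using C(3) by blast
      hence "\<exists>c. c \<in> C \<and> s \<in> ball c 1" by blast
      thus ?thesis unfolding f_def by (rule someI_ex)
    qed
    have "inj_on f S"
    proof (rule inj_onI)
      fix s t assume st: "s \<in> S" "t \<in> S" "f s = f t"
      have "dist s t \<le> dist s (f s) + dist (f s) t" by (rule dist_triangle)
      also have "\<dots> < 2" using f[OF st(1)] f[OF st(2)] st(3) by (simp add: dist_commute)
      finally show "s = t" using S st(1,2) by force
    qed
    moreover have "f ` S \<subseteq> C" using f by auto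
    ultimately show "card S \<le> card C" using C(2) by (intro card_inj_on_le) auto
  qed
qed

lemma kissing_ge:
  fixes S :: "(real^'n) set"
  assumes "finite S" "\<forall>x\<in>S. norm x = 2" "\<forall>x\<in>S. \<forall>y\<in>S. x \<noteq> y \<longrightarrow> dist x y \<ge> 2"
  shows "card S \<le> kissing_number TYPE('n)"
proof -
  obtain K where K: "\<forall>S :: (real^'n) set. (\<forall>x\<in>S. norm x = 2) \<and> (\<forall>x\<in>S. \<forall>y\<in>S. x \<noteq> y \<longrightarrow> dist x y \<ge> 2)
        \<longrightarrow> finite S \<longrightarrow> card S \<le> K" using kissing_sets_bounded by blast
  define M where "M = {card S | S :: (real^'n) set. finite S \<and>
       (\<forall>x\<in>S. norm x = 2) \<and> (\<forall>x\<in>S. \<forall>y\<in>S. x \<noteq> y \<longrightarrow> dist x y \<ge> 2)}"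
  have "M \<subseteq> {..K}" unfolding M_def using K by auto
  hence "finite M" using finite_subset by blast
  moreover have "card S \<in> M" unfolding M_def using assms by blast
  ultimately have "card S \<le> Max M" by (rule Max_ge)
  thus ?thesis unfolding kissing_number_def M_def by simp
qed

lemma sep_normalized:
  fixes x y :: "real^'n"
  assumes "x \<noteq> 0" "y \<noteq> 0" "norm (x - y) > max (norm x) (norm y)"
  shows "dist ((2 / norm x) *\<^sub>R x) ((2 / norm y) *\<^sub>R y) > 2"
proof -
  define a where "a = norm x"
  define b where "b = norm y"
  have a0: "a > 0" and b0: "b > 0" using assms unfolding a_def b_def by auto
  have n2: "(norm (x - y))\<^sup>2 = a\<^sup>2 + b\<^sup>2 - 2 * (x \<bullet> y)"
    unfolding a_def b_def by (simp add: power2_norm_eq_inner inner_diff_left inner_diff_right inner_commute)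
  have "(norm (x - y))\<^sup>2 > (max a b)\<^sup>2" using assms(3) unfolding a_def b_def
    by (intro power_strict_mono) (auto simp: le_max_iff_disj)
  hence "2 * (x \<bullet> y) < (min a b)\<^sup>2" using n2
    by (cases "a \<le> b") (auto simp: max_def min_def)
  also have "(min a b)\<^sup>2 \<le> a * b" using a0 b0
    by (cases "a \<le> b") (auto simp: min_def power2_eq_square intro: mult_right_mono mult_left_mono)
  finally have xy: "2 * (x \<bullet> y) < a * b" .
  have d2: "(dist ((2 / a) *\<^sub>R x) ((2 / b) *\<^sub>R y))\<^sup>2 = 8 - 8 * (x \<bullet> y) / (a * b)"
  proof -
    have "(dist ((2 / a) *\<^sub>R x) ((2 / b) *\<^sub>R y))\<^sup>2 =
          (2/a)\<^sup>2 * (x \<bullet> x) + (2/b)\<^sup>2 * (y \<bullet> y) - 2 * ((2/a) * (2/b)) * (x \<bullet> y)"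
      unfolding dist_norm power2_norm_eq_inner
      by (simp add: inner_diff_left inner_diff_right inner_commute algebra_simps power2_eq_square)
    also have "x \<bullet> x = a\<^sup>2" unfolding a_def by (simp add: power2_norm_eq_inner)
    also have "y \<bullet> y = b\<^sup>2" unfolding b_def by (simp add: power2_norm_eq_inner)
    finally show ?thesis using a0 b0 by (simp add: field_simps power2_eq_square)
  qed
  have "8 * (x \<bullet> y) / (a * b) < 4" using xy a0 b0 by (simp add: field_simps)
  hence "(dist ((2 / a) *\<^sub>R x) ((2 / b) *\<^sub>R y))\<^sup>2 > 2\<^sup>2" using d2 by simp
  hence "dist ((2 / a) *\<^sub>R x) ((2 / b) *\<^sub>R y) > 2"
    by (rule power_less_imp_less_base) simp
  thus ?thesis unfolding a_def b_def .
qed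

lemma kiss_bound:
  fixes V :: "(real^'n) set"
  assumes "finite V" "0 \<notin> V" "\<forall>x\<in>V. \<forall>y\<in>V. x \<noteq> y \<longrightarrow> norm (x - y) > max (norm x) (norm y)"
  shows "card V \<le> kissing_number TYPE('n)"
proof -
  define f where "f x = (2 / norm x) *\<^sub>R x" for x :: "real^'n"
  have sep: "dist (f x) (f y) > 2" if "x \<in> V" "y \<in> V" "x \<noteq> y" for x y
    unfolding f_def using assms that by (intro sep_normalized) auto
  have inj: "inj_on f V"
  proof (rule inj_onI, rule ccontr)
    fix x y assume "x \<in> V" "y \<in> V" "f x = f y" "x \<noteq> y"
    thus False using sep[of x y] by simp
  qed
  have "card (f ` V) \<le> kissing_number TYPE('n)"
  proof (rule kissing_ge)
    show "finite (f ` V)" using assms(1) by simp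
    show "\<forall>x\<in>f ` V. norm x = 2" using assms(2) unfolding f_def by auto
    show "\<forall>x\<in>f ` V. \<forall>y\<in>f ` V. x \<noteq> y \<longrightarrow> dist x y \<ge> 2"
      using sep by (auto intro: less_imp_le)
  qed
  thus ?thesis using card_image[OF inj] by simp
qed

lemma div_max_less:
  fixes x y z c :: real
  assumes "c > 0" "max x y < z"
  shows "max (x / c) (y / c) < z / c"
  using assms by (auto simp: divide_strict_right_mono)

lemma card_le_4:
  fixes V :: "(real^'n) set"
  assumes card2: "CARD('n) = 2" and fV: "finite V" and vV: "v \<in> V" and z: "0 \<notin> V"
    and sm: "\<forall>x\<in>V-{v}. norm v < norm x"
    and pw: "\<forall>x\<in>V. \<forall>y\<in>V. x \<noteq> y \<longrightarrow> max (norm x) (norm y) < norm (x - y)"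
    and tr: "\<forall>x\<in>V-{v}. \<forall>y\<in>V-{v}. x \<noteq> y \<longrightarrow> max (norm x) (norm y) < norm (x + y - v)"
  shows "card V \<le> 4"
proof (rule ccontr)
  assume "\<not> card V \<le> 4"
  hence "4 \<le> card (V - {v})" using vV fV by (simp add: card_Diff_singleton)
  then obtain B where B: "B \<subseteq> V - {v}" "card B = 4" "finite B" by (rule obtain_subset_with_card_n)
  then obtain a b c d where abcd: "B = {a,b,c,d}" "distinct [a,b,c,d]"
    by (auto simp: card_Suc_eq numeral_eq_Suc)
  obtain i1 i2 :: 'n where ii: "(UNIV :: 'n set) = {i1, i2}" "i1 \<noteq> i2"
    using card2 card_2_iff[of "UNIV :: 'n set"] by blast
  define toC where "toC u = Complex (u $ i1) (u $ i2)" for u :: "real^'n"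
  have nC: "norm u = cmod (toC u)" for u
    unfolding toC_def complex_norm norm_vec_def L2_set_def ii using ii(2) by simp
  have lin: "toC (x - y) = toC x - toC y" "toC (x + y - w) = toC x + toC y - toC w" "toC (x + y) = toC x + toC y" for x y w
    unfolding toC_def by (simp_all add: complex_eq_iff)
  have v0: "v \<noteq> 0" using vV z by auto
  define nv where "nv = norm v"
  have nv0: "nv > 0" using v0 unfolding nv_def by simp
  have tv0: "toC v \<noteq> 0" using nv0 nC[of v] unfolding nv_def by auto
  define h where "h u = toC u / toC v" for u
  have hn: "cmod (h u) = norm u / nv" for u unfolding h_def nv_def nC by (simp add: norm_divide)
  have hv: "h v = 1" unfolding h_def using tv0 by simp
  have hd: "h x - h y = h (x - y)" for x y unfolding h_def lin by (simp add: diff_divide_distrib)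
  have ht: "h x + h y - 1 = h (x + y - v)" for x y unfolding h_def lin using tv0 by (simp add: field_simps)
  have hm1: "h x - 1 = h (x - v)" for x using hd[of x v] hv by simp
  have BV: "B \<subseteq> V" "v \<notin> B" using B(1) by auto
  have inV: "a \<in> V" "b \<in> V" "c \<in> V" "d \<in> V" "a \<noteq> v" "b \<noteq> v" "c \<noteq> v" "d \<noteq> v"
    using BV abcd(1) by auto
  have hinj: "h x \<noteq> h y" if "x \<in> V" "y \<in> V" "x \<noteq> y" for x y
  proof
    assume "h x = h y"
    hence "cmod (h (x - y)) = 0" using hd[of x y] by simp
    hence "norm (x - y) = 0" using hn[of "x - y"] nv0 by simp
    thus False using that by simp
  qed
  show False
  proof (rule planar4[of "h a" "h b" "h c" "h d"])
    show "distinct [h a, h b, h c, h d]" using abcd(2) inV hinj by auto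
    show "\<forall>z\<in>{h a, h b, h c, h d}. 1 < cmod z \<and> cmod z < cmod (z - 1)"
    proof
      fix z assume "z \<in> {h a, h b, h c, h d}"
      then obtain x where x: "x \<in> V" "x \<noteq> v" "z = h x" using inV by auto
      have "norm v < norm x" using sm x by auto
      hence "1 < cmod z" using x(3) hn nv0 unfolding nv_def by simp
      moreover have "max (norm x) (norm v) < norm (x - v)" using pw x vV by auto
      hence "norm x / nv < norm (x - v) / nv" using nv0 by (simp add: divide_strict_right_mono)
      hence "cmod z < cmod (z - 1)" using x(3) hn hm1 by simp
      ultimately show "1 < cmod z \<and> cmod z < cmod (z - 1)" by simp
    qed
    show "\<forall>z\<in>{h a, h b, h c, h d}. \<forall>w\<in>{h a, h b, h c, h d}. z \<noteq> w \<longrightarrow>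
        max (cmod z) (cmod w) < cmod (z - w) \<and> max (cmod z) (cmod w) < cmod (z + w - 1)"
    proof (intro ballI impI)
      fix z w assume zw: "z \<in> {h a, h b, h c, h d}" "w \<in> {h a, h b, h c, h d}" "z \<noteq> w"
      obtain x where x: "x \<in> V" "x \<noteq> v" "z = h x" using zw(1) inV by auto
      obtain y where y: "y \<in> V" "y \<noteq> v" "w = h y" using zw(2) inV by auto
      have xy: "x \<noteq> y" using zw(3) x y by auto
      have "max (norm x) (norm y) < norm (x - y)" using pw x y xy by auto
      hence 1: "max (cmod z) (cmod w) < cmod (z - w)"
        using div_max_less[OF nv0] x(3) y(3) hn hd by simp
      have "max (norm x) (norm y) < norm (x + y - v)" using tr x y xy by auto
      hence 2: "max (cmod z) (cmod w) < cmod (z + w - 1)"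
        using div_max_less[OF nv0] x(3) y(3) hn ht by simp
      show "max (cmod z) (cmod w) < cmod (z - w) \<and> max (cmod z) (cmod w) < cmod (z + w - 1)"
        using 1 2 by simp
    qed
  qed
qed

lemma count_bound:
  fixes L :: "(real^'n) set"
  assumes U: "unimodular_lattice L" and N1: "1 \<le> N"
  defines "A \<equiv> int (N div 2)" and "B \<equiv> int N - 1"
  shows "g_N N \<alpha> L \<le> card {t \<in> {A+1..B}. Gm \<alpha> L t < Gm \<alpha> L (t - 1)} + 1"
proof -
  define Tr where "Tr = {t \<in> {A+1..B}. Gm \<alpha> L t < Gm \<alpha> L (t - 1)}"
  define S where "S = insert (Gm \<alpha> L A) (rho \<alpha> L ` Tr)"
  have fTr: "finite Tr" unfolding Tr_def by (rule finite_subset[of _ "{A+1..B}"]) auto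
  have A0: "0 \<le> A" unfolding A_def by simp
  have step: "t \<le> B \<longrightarrow> Gm \<alpha> L t \<in> S" if "A \<le> t" for t
    using that
  proof (induction t rule: int_ge_induct)
    case base
    show ?case unfolding S_def by simp
  next
    case (step i)
    show ?case
    proof
      assume iB: "i + 1 \<le> B"
      have IH: "Gm \<alpha> L i \<in> S" using step iB by simp
      have gs: "Gm \<alpha> L (i + 1) = min (Gm \<alpha> L (i + 1 - 1)) (rho \<alpha> L (i + 1))"
        using step(1) A0 by (intro Gm_step[OF U]) auto
      show "Gm \<alpha> L (i + 1) \<in> S"
      proof (cases "Gm \<alpha> L (i + 1) < Gm \<alpha> L i")
        case True
        hence "i + 1 \<in> Tr" unfolding Tr_def using step(1) iB by auto
        moreover have "Gm \<alpha> L (i + 1) = rho \<alpha> L (i + 1)" using gs True by (auto simp: min_def)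
        ultimately show ?thesis unfolding S_def by auto
      next
        case False
        have "Gm \<alpha> L (i + 1) \<le> Gm \<alpha> L i" using step(1) A0 by (intro Gm_mono) auto
        hence "Gm \<alpha> L (i + 1) = Gm \<alpha> L i" using False by simp
        thus ?thesis using IH by simp
      qed
    qed
  qed
  have sub: "nn_dist \<alpha> L N ` {1..N} \<subseteq> S"
  proof
    fix r assume "r \<in> nn_dist \<alpha> L N ` {1..N}"
    then obtain n where n: "1 \<le> n" "n \<le> N" "r = nn_dist \<alpha> L N n" by auto
    have r: "r = Gm \<alpha> L (max (int n - 1) (int N - int n))" using nn_dist_eq[OF U n(1,2)] n(3) by simp
    have h2: "2 * (N div 2) \<le> N" "N \<le> 2 * (N div 2) + 1" by auto
    have "A \<le> max (int n - 1) (int N - int n)" unfolding A_def using n(1,2) h2 by linarith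
    moreover have "max (int n - 1) (int N - int n) \<le> B" unfolding B_def using n(1,2) by linarith
    ultimately show "r \<in> S" using step r by blast
  qed
  have "g_N N \<alpha> L \<le> card S" unfolding g_N_def S_def using fTr
    by (intro card_mono[OF _ sub[unfolded S_def]]) auto
  also have "card S \<le> card (rho \<alpha> L ` Tr) + 1" unfolding S_def using fTr by (simp add: card_insert_le_m1 card_insert_if)
  also have "card (rho \<alpha> L ` Tr) \<le> card Tr" using fTr by (rule card_image_le)
  finally show ?thesis unfolding Tr_def by simp
qed

lemma records_vectors:
  fixes L :: "(real^'n) set" and \<alpha> :: "real^'n"
  assumes U: "unimodular_lattice L" and N1: "1 \<le> N"
  defines "A \<equiv> int (N div 2)" and "B \<equiv> int N - 1"
  defines "Tr \<equiv> {t \<in> {A+1..B}. Gm \<alpha> L t < Gm \<alpha> L (t - 1)}"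
  shows "\<exists>V :: (real^'n) set. finite V \<and> card V = card Tr \<and> 0 \<notin> V \<and>
     (\<forall>x\<in>V. \<forall>y\<in>V. x \<noteq> y \<longrightarrow> max (norm x) (norm y) < norm (x - y)) \<and>
     (Tr \<noteq> {} \<longrightarrow> (\<exists>v\<in>V. (\<forall>x\<in>V-{v}. norm v < norm x) \<and>
        (\<forall>x\<in>V-{v}. \<forall>y\<in>V-{v}. x \<noteq> y \<longrightarrow> max (norm x) (norm y) < norm (x + y - v))))"
proof -
  have fTr: "finite Tr" unfolding Tr_def by (rule finite_subset[of _ "{A+1..B}"]) auto
  have A0: "0 \<le> A" unfolding A_def by simp
  have B2A: "B \<le> 2 * A"
  proof -
    have "N \<le> 2 * (N div 2) + 1" by auto
    thus ?thesis unfolding A_def B_def by linarith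
  qed
  have T1: "A + 1 \<le> t \<and> t \<le> B \<and> rho \<alpha> L t < Gm \<alpha> L (t - 1) \<and> Gm \<alpha> L t = rho \<alpha> L t" if "t \<in> Tr" for t
  proof -
    have t: "A + 1 \<le> t" "t \<le> B" "Gm \<alpha> L t < Gm \<alpha> L (t - 1)" using that unfolding Tr_def by auto
    have "Gm \<alpha> L t = min (Gm \<alpha> L (t - 1)) (rho \<alpha> L t)" using t(1) A0 by (intro Gm_step[OF U]) auto
    hence "Gm \<alpha> L t = rho \<alpha> L t" using t(3) by (auto simp: min_def split: if_splits)
    thus ?thesis using t by auto
  qed
  have T2: "rho \<alpha> L t < rho \<alpha> L t'" if "t \<in> Tr" "t' \<in> Tr" "t' < t" for t t'
  proof -
    have "Gm \<alpha> L (t - 1) \<le> Gm \<alpha> L t'" using T1[OF that(2)] that(3) A0 by (intro Gm_mono) auto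
    thus ?thesis using T1[OF that(1)] T1[OF that(2)] by auto
  qed
  have T3: "Gm \<alpha> L (t - 1) \<le> Gm \<alpha> L A" if "t \<in> Tr" for t
    using T1[OF that] A0 by (intro Gm_mono) auto
  have "\<forall>t. \<exists>l. l \<in> L \<and> norm (of_int t *\<^sub>R \<alpha> + l) = rho \<alpha> L t \<and> rho \<alpha> L t > 0"
    using rho_props(1)[OF U] by blast
  from choice[OF this] obtain lf where
    lfa: "\<forall>t. lf t \<in> L \<and> norm (of_int t *\<^sub>R \<alpha> + lf t) = rho \<alpha> L t \<and> rho \<alpha> L t > 0"
    by blast
  have lf: "\<And>t. lf t \<in> L" "\<And>t. norm (of_int t *\<^sub>R \<alpha> + lf t) = rho \<alpha> L t"
      "\<And>t. rho \<alpha> L t > 0" using lfa by auto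
  define vv where "vv t = of_int t *\<^sub>R \<alpha> + lf t" for t
  have nvv: "norm (vv t) = rho \<alpha> L t" for t unfolding vv_def using lf(2) .
  have vdiff: "vv t - vv t' = of_int (t - t') *\<^sub>R \<alpha> + (lf t - lf t')" for t t'
    unfolding vv_def by (simp add: algebra_simps scaleR_left_diff_distrib)
  have vsum: "vv a + vv b - vv c = of_int (a + b - c) *\<^sub>R \<alpha> + (lf a + lf b - lf c)" for a b c
    unfolding vv_def by (simp add: algebra_simps scaleR_left_diff_distrib scaleR_left_distrib)
  have Ldiff: "lf t - lf t' \<in> L" for t t' using lat_basic(4)[OF U lf(1) lf(1)] .
  have Lsum: "lf a + lf b - lf c \<in> L" for a b c
    using lat_basic(4)[OF U lat_basic(2)[OF U lf(1) lf(1)] lf(1)] .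
  have pair: "max (norm (vv t)) (norm (vv t')) < norm (vv t - vv t')"
    if "t \<in> Tr" "t' \<in> Tr" "t' < t" for t t'
  proof -
    have lt: "rho \<alpha> L t < rho \<alpha> L t'" by (rule T2[OF that])
    have ne: "vv t - vv t' \<noteq> 0"
    proof
      assume "vv t - vv t' = 0"
      hence "norm (vv t) = norm (vv t')" by simp
      thus False using lt unfolding nvv by simp
    qed
    have r1: "A + 1 \<le> t'" "t \<le> B" using T1[OF that(1)] T1[OF that(2)] by auto
    have "\<bar>t - t'\<bar> \<le> A" unfolding abs_le_iff using r1 that(3) B2A by linarith
    hence "Gm \<alpha> L A \<le> norm (vv t - vv t')"
      using ne unfolding vdiff by (intro lowbd[OF U Ldiff]) auto
    moreover have "rho \<alpha> L t' < Gm \<alpha> L A" using T1[OF that(2)] T3[OF that(2)] by linarith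
    ultimately show ?thesis using lt nvv by auto
  qed
  define V where "V = vv ` Tr"
  have inj: "inj_on vv Tr"
  proof (rule inj_onI, rule ccontr)
    fix t t' assume tt: "t \<in> Tr" "t' \<in> Tr" "vv t = vv t'" "t \<noteq> t'"
    have eq: "rho \<alpha> L t = rho \<alpha> L t'" using arg_cong[OF tt(3), of norm] unfolding nvv .
    show False
    proof (cases "t' < t")
      case True thus False using T2[OF tt(1,2)] eq by simp
    next
      case False hence "t < t'" using tt(4) by simp
      thus False using T2[OF tt(2,1)] eq by simp
    qed
  qed
  have cardV: "card V = card Tr" unfolding V_def using inj by (rule card_image)
  have z: "0 \<notin> V"
  proof
    assume "0 \<in> V"
    then obtain t where "vv t = 0" unfolding V_def by auto
    thus False using nvv[of t] lf(3)[of t] by simp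
  qed
  have pw: "\<forall>x\<in>V. \<forall>y\<in>V. x \<noteq> y \<longrightarrow> max (norm x) (norm y) < norm (x - y)"
  proof (intro ballI impI)
    fix x y assume xy: "x \<in> V" "y \<in> V" "x \<noteq> y"
    obtain t where t: "t \<in> Tr" "x = vv t" using xy(1) unfolding V_def by auto
    obtain t' where t': "t' \<in> Tr" "y = vv t'" using xy(2) unfolding V_def by auto
    have "t \<noteq> t'" using xy(3) t t' by auto
    hence "t' < t \<or> t < t'" by auto
    thus "max (norm x) (norm y) < norm (x - y)"
    proof
      assume "t' < t" thus ?thesis using pair[OF t(1) t'(1)] t t' by simp
    next
      assume "t < t'" thus ?thesis using pair[OF t'(1) t(1)] t t' by (simp add: max.commute norm_minus_commute)
    qed
  qed
  have trip: "max (norm (vv a)) (norm (vv b)) < norm (vv a + vv b - vv c)"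
    if "a \<in> Tr" "b \<in> Tr" "c \<in> Tr" "a < b" "b < c" for a b c
  proof -
    have ab: "rho \<alpha> L b < rho \<alpha> L a" by (rule T2[OF that(2,1,4)])
    have r1: "A + 1 \<le> a" "A + 1 \<le> b" "c \<le> B" using T1[OF that(1)] T1[OF that(2)] T1[OF that(3)] by auto
    have k: "\<bar>a + b - c\<bar> \<le> a - 1" unfolding abs_le_iff using r1 that(4,5) B2A by linarith
    show ?thesis
    proof (cases "vv a + vv b - vv c = 0")
      case False
      hence "Gm \<alpha> L (a - 1) \<le> norm (vv a + vv b - vv c)"
        using k unfolding vsum by (intro lowbd[OF U Lsum]) auto
      thus ?thesis using T1[OF that(1)] ab nvv by auto
    next
      case True
      hence e: "vv c - vv a = vv b" by (simp add: algebra_simps)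
      have ne: "vv c - vv a \<noteq> 0" unfolding e using nvv[of b] lf(3)[of b] by auto
      have "\<bar>c - a\<bar> \<le> A" unfolding abs_le_iff using r1 that(4,5) B2A by linarith
      hence "Gm \<alpha> L A \<le> norm (vv c - vv a)"
        using ne unfolding vdiff by (intro lowbd[OF U Ldiff]) auto
      hence "Gm \<alpha> L A \<le> rho \<alpha> L b" unfolding e nvv .
      moreover have "rho \<alpha> L b < Gm \<alpha> L A" using T1[OF that(2)] T3[OF that(2)] by linarith
      ultimately show ?thesis by simp
    qed
  qed
  have last: "\<exists>v\<in>V. (\<forall>x\<in>V-{v}. norm v < norm x) \<and>
        (\<forall>x\<in>V-{v}. \<forall>y\<in>V-{v}. x \<noteq> y \<longrightarrow> max (norm x) (norm y) < norm (x + y - v))" if ne: "Tr \<noteq> {}"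
  proof -
    define c where "c = Max Tr"
    have c: "c \<in> Tr" "\<And>t. t \<in> Tr \<Longrightarrow> t \<le> c" unfolding c_def using fTr ne by auto
    show ?thesis
    proof (intro bexI[of _ "vv c"] conjI ballI impI)
      show "vv c \<in> V" unfolding V_def using c by auto
      fix x assume x: "x \<in> V - {vv c}"
      then obtain a where a: "a \<in> Tr" "x = vv a" "a \<noteq> c" unfolding V_def by auto
      have "a < c" using c(2)[OF a(1)] a(3) by simp
      thus "norm (vv c) < norm x" using T2[OF c(1) a(1)] nvv a(2) by simp
    next
      fix x y assume x: "x \<in> V - {vv c}" and y: "y \<in> V - {vv c}" and xy: "x \<noteq> y"
      obtain a where a: "a \<in> Tr" "x = vv a" "a \<noteq> c" using x unfolding V_def by auto
      obtain b where b: "b \<in> Tr" "y = vv b" "b \<noteq> c" using y unfolding V_def by auto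
      have ac: "a < c" "b < c" using c(2)[OF a(1)] a(3) c(2)[OF b(1)] b(3) by auto
      have "a \<noteq> b" using xy a b by auto
      hence "a < b \<or> b < a" by auto
      thus "max (norm x) (norm y) < norm (x + y - vv c)"
      proof
        assume "a < b" thus ?thesis using trip[OF a(1) b(1) c(1) _ ac(2)] a b by simp
      next
        assume "b < a" thus ?thesis using trip[OF b(1) a(1) c(1) _ ac(1)] a b
          by (simp add: max.commute add.commute)
      qed
    qed
  qed
  have fV: "finite V" unfolding V_def using fTr by simp
  show ?thesis using fV cardV z pw last by blast
qed

theorem theorem1p1:
  fixes L :: "(real ^ 'n) set" and \<alpha> :: "real ^ 'n" and N :: nat
  assumes "CARD('n) \<ge> 2"
    and "unimodular_lattice L"
  shows "g_N N \<alpha> L \<le> (if CARD('n) = 2 then 5 else kissing_number TYPE('n) + 1)"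
proof (cases "N = 0")
  case True
  thus ?thesis unfolding g_N_def by simp
next
  case False
  hence N1: "1 \<le> N" by simp
  define A where "A = int (N div 2)"
  define B where "B = int N - 1"
  define Tr where "Tr = {t \<in> {A+1..B}. Gm \<alpha> L t < Gm \<alpha> L (t - 1)}"
  have g: "g_N N \<alpha> L \<le> card Tr + 1" unfolding Tr_def A_def B_def by (rule count_bound[OF assms(2) N1])
  obtain V :: "(real^'n) set" where V: "finite V" "card V = card Tr" "0 \<notin> V"
     "\<forall>x\<in>V. \<forall>y\<in>V. x \<noteq> y \<longrightarrow> max (norm x) (norm y) < norm (x - y)"
     "Tr \<noteq> {} \<longrightarrow> (\<exists>v\<in>V. (\<forall>x\<in>V-{v}. norm v < norm x) \<and>
        (\<forall>x\<in>V-{v}. \<forall>y\<in>V-{v}. x \<noteq> y \<longrightarrow> max (norm x) (norm y) < norm (x + y - v)))"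
    using records_vectors[OF assms(2) N1, where \<alpha>=\<alpha>] unfolding Tr_def A_def B_def by blast
  show ?thesis
  proof (cases "CARD('n) = 2")
    case True
    have "card Tr \<le> 4"
    proof (cases "Tr = {}")
      case True thus ?thesis by simp
    next
      case False
      then obtain v where v: "v \<in> V" "\<forall>x\<in>V-{v}. norm v < norm x"
        "\<forall>x\<in>V-{v}. \<forall>y\<in>V-{v}. x \<noteq> y \<longrightarrow> max (norm x) (norm y) < norm (x + y - v)"
        using V(5) by blast
      have "card V \<le> 4" using card_le_4[OF True V(1) v(1) V(3) v(2) V(4) v(3)] .
      thus ?thesis using V(2) by simp
    qed
    thus ?thesis using g True by simp
  next
    case False
    have "card V \<le> kissing_number TYPE('n)"
    proof (rule kiss_bound[OF V(1,3)])
      show "\<forall>x\<in>V. \<forall>y\<in>V. x \<noteq> y \<longrightarrow> max (norm x) (norm y) < norm (x - y)" using V(4) .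
    qed
    thus ?thesis using g False V(2) by simp
  qed
qed

end
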